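(* In the location mixture model, let $F$ be any probability distribution on $\mathcal M$ (possibly with infinite support) and let $P^\star$ have density $p^\star=\int_{\mathcal M}\gamma(\cdot;m)\,dF(m)$. If $P^\star\notin\Pi_K$, then $H(P^\star|\Pi_{K+1})<H(P^\star|\Pi_K)$.
   Context: Location mixture model: $\sigma>0$ is known, $\gamma(\cdot;m)$ is the density (w.r.t. Lebesgue measure on $\mathbb R$) of the normal distribution with mean $m$ and variance $\sigma^2$, and $\mathcal M\subset\mathbb R$ is compact. $\Theta_1=\mathcal M$ and $p_\theta=\gamma(\cdot;\theta)$; for $K\ge2$, $\Theta_K=\{(\pi,\mathbf m):\pi\in[0,\infty)^{K-1},\sum_{k<K}\pi_k\le1,\ \mathbf m\in\mathcal M^K\}$, and $P_\theta$ has density $p_\theta=\sum_{k=1}^{K-1}\pi_k\gamma(\cdot;m_k)+(1-\sum_{k<K}\pi_k)\gamma(\cdot;m_K)$. $\Pi_K=\{P_\theta:\theta\in\Theta_K\}$. $H(P|Q)=\int\log(dP/dQ)\,dP$ if $P\ll Q$, $+\infty$ otherwise; $H(P|\Pi)=\inf_{Q\in\Pi}H(P|Q)$. *)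

theory Defs
  imports "HOL-Probability.Probability"
begin

definition gam :: "real \<Rightarrow> real \<Rightarrow> real \<Rightarrow> real" where
  "gam \<sigma> m x = normal_density m \<sigma> x"

definition mix_density :: "real \<Rightarrow> nat \<Rightarrow> (nat \<Rightarrow> real) \<Rightarrow> (nat \<Rightarrow> real) \<Rightarrow> real \<Rightarrow> real" where
  "mix_density \<sigma> K w m x =
     (\<Sum>k<K - 1. w k * gam \<sigma> (m k) x) + (1 - (\<Sum>k<K - 1. w k)) * gam \<sigma> (m (K - 1)) x"

definition Theta :: "real set \<Rightarrow> nat \<Rightarrow> ((nat \<Rightarrow> real) \<times> (nat \<Rightarrow> real)) set" where
  "Theta Ms K = {(w, m). (\<forall>k<K - 1. 0 \<le> w k) \<and> (\<Sum>k<K - 1. w k) \<le> 1 \<and> (\<forall>k<K. m k \<in> Ms)}"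

definition Pi_model :: "real \<Rightarrow> real set \<Rightarrow> nat \<Rightarrow> real measure set" where
  "Pi_model \<sigma> Ms K = {density lborel (mix_density \<sigma> K w m) | w m. (w, m) \<in> Theta Ms K}"

text \<open>Relative entropy H(P|Q) = int log(dP/dQ) dP if P << Q, +infinity otherwise.
  The integral is taken in the extended reals as (positive part) - (negative part).\<close>
definition rel_entropy :: "real measure \<Rightarrow> real measure \<Rightarrow> ereal" where
  "rel_entropy P Q =
    (if absolutely_continuous Q P then
       enn2ereal (\<integral>\<^sup>+ x. ennreal (max 0 (ln (enn2real (RN_deriv Q P x)))) \<partial>P)
       - enn2ereal (\<integral>\<^sup>+ x. ennreal (max 0 (- ln (enn2real (RN_deriv Q P x)))) \<partial>P)
     else \<infinity>)"

definition rel_entropy_set :: "real measure \<Rightarrow> real measure set \<Rightarrow> ereal" where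
  "rel_entropy_set P Qs = (INF Q\<in>Qs. rel_entropy P Q)"

definition pstar :: "real \<Rightarrow> real measure \<Rightarrow> real \<Rightarrow> real" where
  "pstar \<sigma> F x = (\<integral> m. gam \<sigma> m x \<partial>F)"

end

theory Submission
  imports Defs
begin
lemma gam_eq: "gam s m x = 1 / sqrt (2 * pi * s\<^sup>2) * exp (-(x - m)\<^sup>2 / (2 * s\<^sup>2))"
  by (simp add: gam_def normal_density_def)

lemma gam_upper:
  assumes "s > 0" "\<bar>m\<bar> \<le> R"
  shows "gam s m x \<le> 1 / sqrt (2 * pi * s\<^sup>2) * exp ((2*R*\<bar>x\<bar> - x\<^sup>2) / (2 * s\<^sup>2))"
proof -
  have "-(x - m)\<^sup>2 \<le> 2*R*\<bar>x\<bar> - x\<^sup>2"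
  proof -
    have "x*m \<le> \<bar>x\<bar>*\<bar>m\<bar>" by (metis abs_ge_self abs_mult)
    also have "\<dots> \<le> \<bar>x\<bar>*R" using assms(2) by (intro mult_left_mono) auto
    finally have "x*m \<le> R*\<bar>x\<bar>" by (simp add: mult.commute)
    moreover have "2*R*\<bar>x\<bar> = 2*(R*\<bar>x\<bar>)" by simp
    moreover have "-(x - m)\<^sup>2 = -x\<^sup>2 + 2*(x*m) - m\<^sup>2" by (simp add: power2_eq_square algebra_simps)
    moreover have "0 \<le> m\<^sup>2" by simp
    ultimately show ?thesis by linarith
  qed
  then have "-(x - m)\<^sup>2 / (2 * s\<^sup>2) \<le> (2*R*\<bar>x\<bar> - x\<^sup>2) / (2 * s\<^sup>2)"
    using assms by (intro divide_right_mono) auto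
  then show ?thesis unfolding gam_eq by (intro mult_left_mono) auto
qed

lemma gam_lower:
  assumes "s > 0" "\<bar>m\<bar> \<le> R"
  shows "1 / sqrt (2 * pi * s\<^sup>2) * exp (-(\<bar>x\<bar> + R)\<^sup>2 / (2 * s\<^sup>2)) \<le> gam s m x"
proof -
  have "(x - m)\<^sup>2 \<le> (\<bar>x\<bar> + R)\<^sup>2"
  proof -
    have "\<bar>x - m\<bar> \<le> \<bar>x\<bar> + R" using assms(2) by linarith
    then show ?thesis by (metis abs_ge_zero power2_abs power_mono)
  qed
  then have "-(\<bar>x\<bar> + R)\<^sup>2 / (2 * s\<^sup>2) \<le> -(x - m)\<^sup>2 / (2 * s\<^sup>2)"
    using assms by (intro divide_right_mono) auto
  then show ?thesis unfolding gam_eq by (intro mult_left_mono) auto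
qed

lemma gam_le_c0:
  assumes "s > 0"
  shows "gam s m x \<le> 1 / sqrt (2 * pi * s\<^sup>2)"
proof -
  have "exp (-(x - m)\<^sup>2 / (2 * s\<^sup>2)) \<le> 1" by simp
  then show ?thesis unfolding gam_eq
    by (intro mult_left_le) auto
qed

lemma gam_pos: "s > 0 \<Longrightarrow> gam s m x > 0"
  by (simp add: gam_def normal_density_pos)

lemma exp_integrable:
  fixes a d b :: real
  assumes "b > 0"
  shows "integrable lborel (\<lambda>x. exp (a*\<bar>x\<bar> + d - b*x\<^sup>2))"
proof -
  define s where "s = 1 / sqrt b"
  have s: "s > 0" "s\<^sup>2 = 1 / b" using assms by (auto simp: s_def power_divide)
  have eq: "exp (-(b/2)*x\<^sup>2) = sqrt (2 * pi * s\<^sup>2) * normal_density 0 s x" for x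
    using s assms by (simp add: normal_density_def field_simps)
  have int: "integrable lborel (\<lambda>x. exp (a\<^sup>2/(2*b) + d) * (sqrt (2 * pi * s\<^sup>2) * normal_density 0 s x))"
    using s(1) by simp
  show ?thesis
  proof (rule Bochner_Integration.integrable_bound[OF int])
    show "AE x in lborel. norm (exp (a*\<bar>x\<bar> + d - b*x\<^sup>2)) \<le> norm (exp (a\<^sup>2/(2*b) + d) * (sqrt (2 * pi * s\<^sup>2) * normal_density 0 s x))"
    proof (intro AE_I2)
      fix x
      have "a*\<bar>x\<bar> \<le> (b/2)*x\<^sup>2 + a\<^sup>2/(2*b)"
      proof -
        have "(b/2)*x\<^sup>2 + a\<^sup>2/(2*b) - a*\<bar>x\<bar> = (b*\<bar>x\<bar> - a)\<^sup>2/(2*b)"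
          using assms by (simp add: field_simps power2_eq_square)
        moreover have "0 \<le> (b*\<bar>x\<bar> - a)\<^sup>2/(2*b)" using assms by simp
        ultimately show ?thesis by linarith
      qed
      then have "exp (a*\<bar>x\<bar> + d - b*x\<^sup>2) \<le> exp (a\<^sup>2/(2*b) + d) * exp (-(b/2)*x\<^sup>2)"
        by (simp add: exp_add[symmetric])
      then show "norm (exp (a*\<bar>x\<bar> + d - b*x\<^sup>2)) \<le> norm (exp (a\<^sup>2/(2*b) + d) * (sqrt (2 * pi * s\<^sup>2) * normal_density 0 s x))"
        using eq[of x] by simp
    qed
  qed simp
qed

locale setting =
  fixes \<sigma> R :: real and Ms :: "real set" and F :: "real measure"
  assumes sig: "\<sigma> > 0" and Rnn: "0 \<le> R" and MsR: "\<And>m. m \<in> Ms \<Longrightarrow> \<bar>m\<bar> \<le> R"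
    and cMs: "compact Ms"
    and PF: "prob_space F" and sF: "sets F = sets borel" and FMs: "emeasure F Ms = 1"
begin

sublocale F: prob_space F by (rule PF)

definition "c0 = 1 / sqrt (2 * pi * \<sigma>\<^sup>2)"
definition "gl x = c0 * exp (-(\<bar>x\<bar> + R)\<^sup>2 / (2 * \<sigma>\<^sup>2))"
definition "gu x = c0 * exp ((2*R*\<bar>x\<bar> - x\<^sup>2) / (2 * \<sigma>\<^sup>2))"
abbreviation "p \<equiv> pstar \<sigma> F"

lemma c0_pos: "c0 > 0" using sig by (simp add: c0_def)

lemma gl_pos: "gl x > 0" using c0_pos by (simp add: gl_def)

lemma gam_bounds:
  assumes "m \<in> Ms"
  shows "gl x \<le> gam \<sigma> m x" "gam \<sigma> m x \<le> gu x" "gam \<sigma> m x \<le> c0" "0 < gam \<sigma> m x"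
  using gam_lower[OF sig MsR[OF assms]] gam_upper[OF sig MsR[OF assms]] gam_le_c0[OF sig] gam_pos[OF sig]
  by (auto simp: gl_def gu_def c0_def)

lemma gam_le_c0': "gam \<sigma> m x \<le> c0" using gam_le_c0[OF sig] by (simp add: c0_def)

lemma Ms_closed: "closed Ms" using cMs by (rule compact_imp_closed)

lemma Ms_sets: "Ms \<in> sets F" using Ms_closed sF by simp

lemma AE_Ms: "AE m in F. m \<in> Ms"
proof -
  have "F.prob Ms = 1" using FMs by (simp add: F.emeasure_eq_measure)
  then show ?thesis using F.AE_prob_1 by blast
qed

lemma Ms_ne: "Ms \<noteq> {}" using FMs by auto

lemma meas_gam2: "(\<lambda>(x, m). gam \<sigma> m x) \<in> borel_measurable (lborel \<Otimes>\<^sub>M F)"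
proof -
  have [measurable_cong]: "sets F = sets borel" by (rule sF)
  show ?thesis unfolding gam_def normal_density_def by measurable
qed

lemma meas_gamF: "(\<lambda>m. gam \<sigma> m x) \<in> borel_measurable F"
proof -
  have [measurable_cong]: "sets F = sets borel" by (rule sF)
  show ?thesis unfolding gam_def normal_density_def by measurable
qed

lemma int_gamF: "integrable F (\<lambda>m. gam \<sigma> m x)"
  by (rule F.integrable_const_bound[where B=c0]) (auto intro: meas_gamF simp: gam_le_c0' less_imp_le[OF gam_pos[OF sig]])

lemma p_meas[measurable]: "p \<in> borel_measurable lborel"
proof -
  have "(\<lambda>x. \<integral>m. gam \<sigma> m x \<partial>F) \<in> borel_measurable lborel"
    using meas_gam2 by (rule F.borel_measurable_lebesgue_integral)
  then show ?thesis by (simp add: pstar_def[abs_def])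
qed

lemma p_bounds: "gl x \<le> p x" "p x \<le> gu x" "p x \<le> c0" "0 < p x"
proof -
  have "gl x = (\<integral>m. gl x \<partial>F)" by (simp add: F.prob_space)
  also have "\<dots> \<le> p x" unfolding pstar_def
    by (intro integral_mono_AE int_gamF) (auto intro: AE_mp[OF AE_Ms] simp: gam_bounds)
  finally show "gl x \<le> p x" .
  then show "0 < p x" using gl_pos[of x] by linarith
  have "p x \<le> (\<integral>m. gu x \<partial>F)" unfolding pstar_def
    by (intro integral_mono_AE int_gamF) (auto intro: AE_mp[OF AE_Ms] simp: gam_bounds)
  then show "p x \<le> gu x" by (simp add: F.prob_space)
  have "p x \<le> (\<integral>m. c0 \<partial>F)" unfolding pstar_def
    by (intro integral_mono_AE int_gamF) (auto simp: gam_le_c0')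
  then show "p x \<le> c0" by (simp add: F.prob_space)
qed

lemma p_nn: "ennreal (p x) = (\<integral>\<^sup>+m. gam \<sigma> m x \<partial>F)"
  unfolding pstar_def
  by (rule nn_integral_eq_integral[symmetric]) (auto intro: int_gamF less_imp_le[OF gam_pos[OF sig]])

lemma gam_nn_int: "(\<integral>\<^sup>+x. ennreal (gam \<sigma> m x) \<partial>lborel) = 1"
  unfolding gam_def using sig
  by (subst nn_integral_eq_integral) auto

sublocale LF: pair_sigma_finite lborel F
  by (intro pair_sigma_finite.intro lborel.sigma_finite_measure_axioms F.sigma_finite_measure_axioms)

lemma p_nn_int: "(\<integral>\<^sup>+x. ennreal (p x) \<partial>lborel) = 1"
proof -
  have "(\<integral>\<^sup>+x. ennreal (p x) \<partial>lborel) = (\<integral>\<^sup>+x. (\<integral>\<^sup>+m. ennreal (gam \<sigma> m x) \<partial>F) \<partial>lborel)"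
    by (simp add: p_nn)
  also have "\<dots> = (\<integral>\<^sup>+m. (\<integral>\<^sup>+x. ennreal (gam \<sigma> m x) \<partial>lborel) \<partial>F)"
    by (rule LF.Fubini'[symmetric]) (use meas_gam2 in measurable)
  also have "\<dots> = 1" by (simp add: gam_nn_int F.emeasure_space_1)
  finally show ?thesis .
qed

lemma p_integrable: "integrable lborel p"
  using p_nn_int p_bounds(4)
  by (intro integrableI_nonneg) (auto intro: less_imp_le)

lemma p_int: "(\<integral>x. p x \<partial>lborel) = 1"
proof -
  have "ennreal (\<integral>x. p x \<partial>lborel) = 1"
    using p_nn_int p_bounds(4) by (subst nn_integral_eq_integral[symmetric]) (auto intro: p_integrable less_imp_le)
  then show ?thesis by simp
qed

end

lemma conv_bounds:
  fixes w f :: "nat \<Rightarrow> real"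
  assumes K: "K \<ge> 1" and w: "\<forall>k<K - 1. 0 \<le> w k" "(\<Sum>k<K - 1. w k) \<le> 1"
    and f: "\<And>k. k < K \<Longrightarrow> a \<le> f k \<and> f k \<le> b"
  shows "a \<le> (\<Sum>k<K - 1. w k * f k) + (1 - (\<Sum>k<K - 1. w k)) * f (K - 1)"
    "(\<Sum>k<K - 1. w k * f k) + (1 - (\<Sum>k<K - 1. w k)) * f (K - 1) \<le> b"
proof -
  have "(\<Sum>k<K - 1. w k * a) \<le> (\<Sum>k<K - 1. w k * f k)"
    using w f K by (intro sum_mono mult_left_mono) auto
  moreover have "(1 - (\<Sum>k<K - 1. w k)) * a \<le> (1 - (\<Sum>k<K - 1. w k)) * f (K - 1)"
    using w f K by (intro mult_left_mono) auto
  moreover have "(\<Sum>k<K - 1. w k * a) = (\<Sum>k<K - 1. w k) * a" by (rule sum_distrib_right[symmetric])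
  moreover have "(\<Sum>k<K - 1. w k) * a + (1 - (\<Sum>k<K - 1. w k)) * a = a"
    by (simp add: algebra_simps)
  ultimately show "a \<le> (\<Sum>k<K - 1. w k * f k) + (1 - (\<Sum>k<K - 1. w k)) * f (K - 1)"
    by linarith
  have "(\<Sum>k<K - 1. w k * f k) \<le> (\<Sum>k<K - 1. w k * b)"
    using w f K by (intro sum_mono mult_left_mono) auto
  moreover have "(1 - (\<Sum>k<K - 1. w k)) * f (K - 1) \<le> (1 - (\<Sum>k<K - 1. w k)) * b"
    using w f K by (intro mult_left_mono) auto
  moreover have "(\<Sum>k<K - 1. w k * b) = (\<Sum>k<K - 1. w k) * b" by (rule sum_distrib_right[symmetric])
  moreover have "(\<Sum>k<K - 1. w k) * b + (1 - (\<Sum>k<K - 1. w k)) * b = b"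
    by (simp add: algebra_simps)
  ultimately show "(\<Sum>k<K - 1. w k * f k) + (1 - (\<Sum>k<K - 1. w k)) * f (K - 1) \<le> b"
    by linarith
qed

context setting
begin

lemma mix_bounds:
  assumes K: "K \<ge> 1" and th: "(w, m) \<in> Theta Ms K"
  shows "gl x \<le> mix_density \<sigma> K w m x" "mix_density \<sigma> K w m x \<le> gu x"
    "mix_density \<sigma> K w m x \<le> c0" "0 < mix_density \<sigma> K w m x"
proof -
  have w: "\<forall>k<K - 1. 0 \<le> w k" "(\<Sum>k<K - 1. w k) \<le> 1" and mm: "\<And>k. k < K \<Longrightarrow> m k \<in> Ms"
    using th by (auto simp: Theta_def)
  note cb = conv_bounds[OF K w, of "gl x" "\<lambda>k. gam \<sigma> (m k) x" "gu x"]
  note cb0 = conv_bounds[OF K w, of "gl x" "\<lambda>k. gam \<sigma> (m k) x"]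
  show "gl x \<le> mix_density \<sigma> K w m x"
    unfolding mix_density_def by (rule cb(1)) (auto simp: gam_bounds mm)
  then show "0 < mix_density \<sigma> K w m x" using gl_pos[of x] by linarith
  show "mix_density \<sigma> K w m x \<le> gu x"
    unfolding mix_density_def by (rule cb(2)) (auto simp: gam_bounds mm)
  show "mix_density \<sigma> K w m x \<le> c0"
    unfolding mix_density_def by (rule conv_bounds(2)[OF K w, of "gl x"]) (auto simp: gam_bounds mm gam_le_c0')
qed

lemma gam_integrable[simp]: "integrable lborel (gam \<sigma> \<mu>)"
  unfolding gam_def[abs_def] using sig by simp

lemma gam_integral[simp]: "(\<integral>x. gam \<sigma> \<mu> x \<partial>lborel) = 1"
  unfolding gam_def using sig by simp

lemma gam_meas[measurable]: "gam \<sigma> \<mu> \<in> borel_measurable borel"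
  unfolding gam_def[abs_def] by simp

lemma mix_meas[measurable]: "mix_density \<sigma> K w m \<in> borel_measurable borel"
  unfolding mix_density_def[abs_def] by measurable

lemma mix_hbi: "has_bochner_integral lborel (mix_density \<sigma> K w m) 1"
proof -
  have "has_bochner_integral lborel (\<lambda>x. \<Sum>k<K - 1. w k * gam \<sigma> (m k) x) (\<Sum>k<K - 1. w k * 1)"
    by (intro has_bochner_integral_sum has_bochner_integral_mult_right)
       (simp add: has_bochner_integral_iff)
  moreover have "has_bochner_integral lborel (\<lambda>x. (1 - (\<Sum>k<K - 1. w k)) * gam \<sigma> (m (K - 1)) x) ((1 - (\<Sum>k<K - 1. w k)) * 1)"
    by (intro has_bochner_integral_mult_right) (simp add: has_bochner_integral_iff)
  ultimately have "has_bochner_integral lborel (mix_density \<sigma> K w m) ((\<Sum>k<K - 1. w k * 1) + (1 - (\<Sum>k<K - 1. w k)) * 1)"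
    unfolding mix_density_def[abs_def] by (rule has_bochner_integral_add)
  then show ?thesis by simp
qed

lemma mix_integrable: "integrable lborel (mix_density \<sigma> K w m)"
  using mix_hbi by (simp add: has_bochner_integral_iff)

lemma mix_int: "(\<integral>x. mix_density \<sigma> K w m x \<partial>lborel) = 1"
  using mix_hbi by (simp add: has_bochner_integral_iff)

lemma mix_nn_int:
  assumes K: "K \<ge> 1" and th: "(w, m) \<in> Theta Ms K"
  shows "(\<integral>\<^sup>+x. ennreal (mix_density \<sigma> K w m x) \<partial>lborel) = 1"
  using mix_int[of K w m] mix_bounds(4)[OF K th]
  by (subst nn_integral_eq_integral) (auto intro: mix_integrable less_imp_le)

end

lemma poly_exp_integrable:
  fixes a d b R :: real
  assumes "b > 0"
  shows "integrable lborel (\<lambda>x. (\<bar>x\<bar> + R)\<^sup>2 * exp (a*\<bar>x\<bar> + d - b*x\<^sup>2))"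
proof -
  have int: "integrable lborel (\<lambda>x. 2*R\<^sup>2 * exp (a*\<bar>x\<bar> + d - b*x\<^sup>2) + (4/b) * exp (a*\<bar>x\<bar> + d - (b/2)*x\<^sup>2))"
    using assms by (intro Bochner_Integration.integrable_add Bochner_Integration.integrable_mult_right exp_integrable) auto
  show ?thesis
  proof (rule Bochner_Integration.integrable_bound[OF int])
    show "AE x in lborel. norm ((\<bar>x\<bar> + R)\<^sup>2 * exp (a*\<bar>x\<bar> + d - b*x\<^sup>2)) \<le>
        norm (2*R\<^sup>2 * exp (a*\<bar>x\<bar> + d - b*x\<^sup>2) + (4/b) * exp (a*\<bar>x\<bar> + d - (b/2)*x\<^sup>2))"
    proof (intro AE_I2)
      fix x :: real
      have sq: "(\<bar>x\<bar> + R)\<^sup>2 \<le> 2*x\<^sup>2 + 2*R\<^sup>2"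
      proof -
        have "0 \<le> (\<bar>x\<bar> - R)\<^sup>2" by simp
        then show ?thesis by (simp add: power2_eq_square algebra_simps)
      qed
      have "(b/2)*x\<^sup>2 \<le> exp ((b/2)*x\<^sup>2)"
        using exp_ge_add_one_self[of "(b/2)*x\<^sup>2"] by linarith
      then have x2: "2*x\<^sup>2 \<le> (4/b) * exp ((b/2)*x\<^sup>2)"
        using assms by (simp add: field_simps)
      have e: "exp ((b/2)*x\<^sup>2) * exp (a*\<bar>x\<bar> + d - b*x\<^sup>2) = exp (a*\<bar>x\<bar> + d - (b/2)*x\<^sup>2)"
        unfolding mult_exp_exp by (rule arg_cong[where f=exp]) (simp add: field_simps)
      have "(\<bar>x\<bar> + R)\<^sup>2 * exp (a*\<bar>x\<bar> + d - b*x\<^sup>2) \<le> (2*R\<^sup>2 + (4/b) * exp ((b/2)*x\<^sup>2)) * exp (a*\<bar>x\<bar> + d - b*x\<^sup>2)"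
        using sq x2 by (intro mult_right_mono) auto
      also have "\<dots> = 2*R\<^sup>2 * exp (a*\<bar>x\<bar> + d - b*x\<^sup>2) + (4/b) * (exp ((b/2)*x\<^sup>2) * exp (a*\<bar>x\<bar> + d - b*x\<^sup>2))"
        by (simp only: distrib_right mult.assoc)
      also have "\<dots> = 2*R\<^sup>2 * exp (a*\<bar>x\<bar> + d - b*x\<^sup>2) + (4/b) * exp (a*\<bar>x\<bar> + d - (b/2)*x\<^sup>2)"
        by (simp only: e)
      finally show "norm ((\<bar>x\<bar> + R)\<^sup>2 * exp (a*\<bar>x\<bar> + d - b*x\<^sup>2)) \<le>
        norm (2*R\<^sup>2 * exp (a*\<bar>x\<bar> + d - b*x\<^sup>2) + (4/b) * exp (a*\<bar>x\<bar> + d - (b/2)*x\<^sup>2))"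
        using assms by simp
    qed
  qed simp
qed

context setting
begin

definition "W x = gu x * (\<bar>ln c0\<bar> + (\<bar>x\<bar> + R)\<^sup>2 / (2 * \<sigma>\<^sup>2))"

lemma gu_alt: "gu x = c0 * exp ((R/\<sigma>\<^sup>2)*\<bar>x\<bar> + 0 - (1/(2*\<sigma>\<^sup>2))*x\<^sup>2)"
proof -
  have "(2*R*\<bar>x\<bar> - x\<^sup>2) / (2 * \<sigma>\<^sup>2) = (R/\<sigma>\<^sup>2)*\<bar>x\<bar> + 0 - (1/(2*\<sigma>\<^sup>2))*x\<^sup>2"
    using sig by (simp add: field_simps)
  then show ?thesis by (simp add: gu_def)
qed

lemma gu_nonneg: "0 \<le> gu x" using c0_pos by (simp add: gu_def)

lemma W_integrable: "integrable lborel W"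
proof -
  have b: "1/(2*\<sigma>\<^sup>2) > 0" using sig by simp
  have "integrable lborel (\<lambda>x. (c0*\<bar>ln c0\<bar>) * exp ((R/\<sigma>\<^sup>2)*\<bar>x\<bar> + 0 - (1/(2*\<sigma>\<^sup>2))*x\<^sup>2)
      + (c0/(2 * \<sigma>\<^sup>2)) * ((\<bar>x\<bar> + R)\<^sup>2 * exp ((R/\<sigma>\<^sup>2)*\<bar>x\<bar> + 0 - (1/(2*\<sigma>\<^sup>2))*x\<^sup>2)))"
    by (intro Bochner_Integration.integrable_add Bochner_Integration.integrable_mult_right exp_integrable[OF b] poly_exp_integrable[OF b])
  moreover have "W = (\<lambda>x. (c0*\<bar>ln c0\<bar>) * exp ((R/\<sigma>\<^sup>2)*\<bar>x\<bar> + 0 - (1/(2*\<sigma>\<^sup>2))*x\<^sup>2)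
      + (c0/(2 * \<sigma>\<^sup>2)) * ((\<bar>x\<bar> + R)\<^sup>2 * exp ((R/\<sigma>\<^sup>2)*\<bar>x\<bar> + 0 - (1/(2*\<sigma>\<^sup>2))*x\<^sup>2)))"
  proof (rule ext)
    fix x
    show "W x = (c0*\<bar>ln c0\<bar>) * exp ((R/\<sigma>\<^sup>2)*\<bar>x\<bar> + 0 - (1/(2*\<sigma>\<^sup>2))*x\<^sup>2)
      + (c0/(2 * \<sigma>\<^sup>2)) * ((\<bar>x\<bar> + R)\<^sup>2 * exp ((R/\<sigma>\<^sup>2)*\<bar>x\<bar> + 0 - (1/(2*\<sigma>\<^sup>2))*x\<^sup>2))"
      unfolding W_def gu_alt[of x] using sig by (simp add: field_simps)
  qed
  ultimately show ?thesis by simp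
qed

lemma ln_bound:
  assumes "gl x \<le> y" "y \<le> c0"
  shows "\<bar>ln y\<bar> \<le> \<bar>ln c0\<bar> + (\<bar>x\<bar> + R)\<^sup>2 / (2 * \<sigma>\<^sup>2)"
proof -
  have y: "y > 0" using gl_pos[of x] assms by linarith
  have "ln (gl x) = ln c0 - (\<bar>x\<bar> + R)\<^sup>2 / (2 * \<sigma>\<^sup>2)"
    using c0_pos by (simp add: gl_def ln_mult)
  moreover have "ln (gl x) \<le> ln y" using assms gl_pos[of x] by simp
  moreover have "ln y \<le> ln c0" using assms y by simp
  moreover have "0 \<le> (\<bar>x\<bar> + R)\<^sup>2 / (2 * \<sigma>\<^sup>2)" by simp
  ultimately show ?thesis by linarith
qed

lemma plog_bound:
  assumes "gl x \<le> y" "y \<le> c0"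
  shows "\<bar>p x * ln y\<bar> \<le> W x"
proof -
  have "\<bar>p x * ln y\<bar> = p x * \<bar>ln y\<bar>" using p_bounds(4)[of x] by (simp add: abs_mult)
  also have "\<dots> \<le> gu x * (\<bar>ln c0\<bar> + (\<bar>x\<bar> + R)\<^sup>2 / (2 * \<sigma>\<^sup>2))"
    using ln_bound[OF assms] p_bounds(2)[of x] p_bounds(4)[of x] gu_nonneg[of x]
    by (intro mult_mono) auto
  finally show ?thesis by (simp add: W_def)
qed

lemma plog_int:
  assumes f[measurable]: "f \<in> borel_measurable borel" and fb: "\<And>x. gl x \<le> f x" "\<And>x. f x \<le> c0"
  shows "integrable lborel (\<lambda>x. p x * ln (f x))"
proof (rule Bochner_Integration.integrable_bound[OF W_integrable])
  show "AE x in lborel. norm (p x * ln (f x)) \<le> norm (W x)"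
    using plog_bound[OF fb] by (auto intro!: AE_I2 order_trans[OF _ abs_ge_self])
qed measurable

lemma plogp_int: "integrable lborel (\<lambda>x. p x * ln (p x))"
  by (rule plog_int) (auto simp: p_bounds)

end

context setting
begin

lemma rel_ent:
  assumes f[measurable]: "f \<in> borel_measurable borel" and fb: "\<And>x. gl x \<le> f x" "\<And>x. f x \<le> c0"
    and fint: "(\<integral>\<^sup>+x. ennreal (f x) \<partial>lborel) = 1"
  shows "rel_entropy (density lborel p) (density lborel f)
       = ereal ((\<integral>x. p x * ln (p x) \<partial>lborel) - (\<integral>x. p x * ln (f x) \<partial>lborel))"
proof -
  define Q where "Q = density lborel f"
  define P where "P = density lborel p"
  have fpos: "\<And>x. f x > 0" using fb(1) gl_pos by (metis less_le_trans)
  have ppos: "\<And>x. p x > 0" by (rule p_bounds(4))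
  have ac: "absolutely_continuous Q P"
    unfolding absolutely_continuous_def
  proof
    fix A assume "A \<in> null_sets Q"
    then have A: "A \<in> sets lborel" "AE x in lborel. x \<in> A \<longrightarrow> ennreal (f x) = 0"
      unfolding Q_def by (subst (asm) null_sets_density_iff; simp)+
    then have "AE x in lborel. x \<in> A \<longrightarrow> ennreal (p x) = 0"
      by eventually_elim (metis fpos ennreal_eq_0_iff not_le)
    with A show "A \<in> null_sets P" unfolding P_def
      by (subst null_sets_density_iff) auto
  qed
  have probQ: "prob_space Q"
    by (rule prob_spaceI) (simp add: Q_def emeasure_density fint)
  interpret Q: sigma_finite_measure Q by (rule prob_space_imp_sigma_finite[OF probQ])
  have sQ[measurable_cong]: "sets Q = sets borel" by (simp add: Q_def)
  have dens: "density Q (\<lambda>x. ennreal (p x / f x)) = P"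
  proof -
    have "density Q (\<lambda>x. ennreal (p x / f x)) = density lborel (\<lambda>x. ennreal (f x) * ennreal (p x / f x))"
      unfolding Q_def by (rule density_density_eq) auto
    also have "(\<lambda>x. ennreal (f x) * ennreal (p x / f x)) = (\<lambda>x. ennreal (p x))"
    proof (rule ext)
      fix x
      have "ennreal (f x) * ennreal (p x / f x) = ennreal (f x * (p x / f x))"
        using fpos[of x] ppos[of x] by (intro ennreal_mult[symmetric]) auto
      also have "\<dots> = ennreal (p x)" using fpos[of x] by simp
      finally show "ennreal (f x) * ennreal (p x / f x) = ennreal (p x)" .
    qed
    finally show ?thesis by (simp add: P_def)
  qed
  have "AE x in Q. ennreal (p x / f x) = RN_deriv Q P x"
    by (rule Q.RN_deriv_unique[OF _ dens]) measurable
  then have RN: "AE x in lborel. RN_deriv Q P x = ennreal (p x / f x)"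
    unfolding Q_def
    by (subst (asm) AE_density; simp; elim AE_mp) (intro AE_I2, use fpos in auto)
  have RNm: "RN_deriv Q P \<in> borel_measurable lborel"
    using borel_measurable_RN_deriv[of Q P] by (simp add: Q_def)
  define ph where "ph x = p x * ln (p x) - p x * ln (f x)" for x
  have ph_int: "integrable lborel ph"
    unfolding ph_def[abs_def] by (intro Bochner_Integration.integrable_diff plogp_int plog_int f fb)
  have phm[measurable]: "ph \<in> borel_measurable borel"
    using ph_int by (simp add: borel_measurable_integrable)
  have key: "p x * max 0 (s * ln (p x / f x)) = max 0 (s * ph x)" if "s = 1 \<or> s = -1" for x s
  proof -
    have "ln (p x / f x) = ln (p x) - ln (f x)" using fpos[of x] ppos[of x] by (simp add: ln_div)
    moreover have "s * ph x = p x * (s * (ln (p x) - ln (f x)))" by (simp add: ph_def algebra_simps)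
    ultimately have "s * ph x = p x * (s * ln (p x / f x))" by simp
    then show ?thesis using ppos[of x]
      by (metis max_mult_distrib_left less_imp_le mult_zero_right)
  qed
  have part: "(\<integral>\<^sup>+ x. ennreal (max 0 (s * ln (enn2real (RN_deriv Q P x)))) \<partial>P)
       = ennreal (\<integral>x. max 0 (s * ph x) \<partial>lborel)" if s: "s = 1 \<or> s = -1" for s
  proof -
    have "(\<integral>\<^sup>+ x. ennreal (max 0 (s * ln (enn2real (RN_deriv Q P x)))) \<partial>P)
        = (\<integral>\<^sup>+ x. ennreal (p x) * ennreal (max 0 (s * ln (enn2real (RN_deriv Q P x)))) \<partial>lborel)"
      unfolding P_def by (rule nn_integral_density) (use RNm in measurable)
    also have "\<dots> = (\<integral>\<^sup>+ x. ennreal (max 0 (s * ph x)) \<partial>lborel)"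
    proof (rule nn_integral_cong_AE)
      show "AE x in lborel. ennreal (p x) * ennreal (max 0 (s * ln (enn2real (RN_deriv Q P x)))) = ennreal (max 0 (s * ph x))"
        using RN
      proof eventually_elim
        case (elim x)
        have "enn2real (RN_deriv Q P x) = p x / f x" using elim fpos[of x] ppos[of x] by simp
        then have "ennreal (p x) * ennreal (max 0 (s * ln (enn2real (RN_deriv Q P x))))
            = ennreal (p x * max 0 (s * ln (p x / f x)))"
          using ppos[of x] by (simp add: ennreal_mult)
        also have "\<dots> = ennreal (max 0 (s * ph x))" using key[OF s] by simp
        finally show ?case .
      qed
    qed
    also have "\<dots> = ennreal (\<integral>x. max 0 (s * ph x) \<partial>lborel)"
      by (rule nn_integral_eq_integral) (auto intro!: integrable_max Bochner_Integration.integrable_mult_right ph_int)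
    finally show ?thesis .
  qed
  have "rel_entropy P Q = enn2ereal (ennreal (\<integral>x. max 0 (1 * ph x) \<partial>lborel))
        - enn2ereal (ennreal (\<integral>x. max 0 (-1 * ph x) \<partial>lborel))"
    unfolding rel_entropy_def using ac part[of 1] part[of "-1"] by simp
  also have "\<dots> = ereal ((\<integral>x. max 0 (ph x) \<partial>lborel) - (\<integral>x. max 0 (- ph x) \<partial>lborel))"
    by (simp add: integral_nonneg_AE)
  also have "(\<integral>x. max 0 (ph x) \<partial>lborel) - (\<integral>x. max 0 (- ph x) \<partial>lborel) = (\<integral>x. ph x \<partial>lborel)"
  proof -
    have "(\<integral>x. max 0 (ph x) \<partial>lborel) - (\<integral>x. max 0 (- ph x) \<partial>lborel) = (\<integral>x. max 0 (ph x) - max 0 (- ph x) \<partial>lborel)"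
      by (rule Bochner_Integration.integral_diff[symmetric]) (auto intro!: integrable_max ph_int)
    also have "\<dots> = (\<integral>x. ph x \<partial>lborel)"
      by (rule Bochner_Integration.integral_cong) auto
    finally show ?thesis .
  qed
  also have "(\<integral>x. ph x \<partial>lborel) = (\<integral>x. p x * ln (p x) \<partial>lborel) - (\<integral>x. p x * ln (f x) \<partial>lborel)"
    unfolding ph_def by (rule Bochner_Integration.integral_diff) (intro plogp_int plog_int f fb)+
  finally show ?thesis by (simp add: P_def Q_def)
qed

end

lemma seq_coords:
  fixes f :: "nat \<Rightarrow> nat \<Rightarrow> real"
  assumes S: "compact S" and f: "\<And>n k. k < N \<Longrightarrow> f n k \<in> S"
  shows "\<exists>r l. strict_mono r \<and> (\<forall>k<N. l k \<in> S \<and> (\<lambda>n. f (r n) k) \<longlonglongrightarrow> l k)"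
  using f
proof (induction N)
  case 0
  show ?case by (rule exI[of _ id]) (auto simp: strict_mono_def)
next
  case (Suc N)
  from Suc.IH Suc.prems obtain r l where r: "strict_mono r" and l: "\<forall>k<N. l k \<in> S \<and> (\<lambda>n. f (r n) k) \<longlonglongrightarrow> l k"
    by auto
  have "\<forall>n. f (r n) N \<in> S" using Suc.prems by auto
  from seq_compactE[OF compact_imp_seq_compact[OF S] this]
  obtain l' r2 where l': "l' \<in> S" "strict_mono r2" "((\<lambda>n. f (r n) N) \<circ> r2) \<longlonglongrightarrow> l'" by blast
  show ?case
  proof (intro exI conjI allI impI)
    show "strict_mono (r \<circ> r2)" using r l'(2) by (rule strict_mono_o)
    fix k assume k: "k < Suc N"
    show "(l(N := l')) k \<in> S" using l l' k by (cases "k = N") auto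
    show "(\<lambda>n. f ((r \<circ> r2) n) k) \<longlonglongrightarrow> (l(N := l')) k"
    proof (cases "k = N")
      case True then show ?thesis using l'(3) by (simp add: comp_def)
    next
      case False
      then have "(\<lambda>n. f (r n) k) \<longlonglongrightarrow> l k" using l k by auto
      from LIMSEQ_subseq_LIMSEQ[OF this l'(2)] show ?thesis using False by (simp add: comp_def)
    qed
  qed
qed

context setting
begin

definition "Lf K w m = (\<integral>x. p x * ln (mix_density \<sigma> K w m x) \<partial>lborel)"

lemma mix_plog_int:
  assumes "K \<ge> 1" "(w, m) \<in> Theta Ms K"
  shows "integrable lborel (\<lambda>x. p x * ln (mix_density \<sigma> K w m x))"
  by (rule plog_int) (auto intro: mix_bounds[OF assms])

lemma Lf_le: assumes "K \<ge> 1" "(w, m) \<in> Theta Ms K" shows "Lf K w m \<le> ln c0"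
proof -
  have "Lf K w m \<le> (\<integral>x. p x * ln c0 \<partial>lborel)"
    unfolding Lf_def
  proof (rule integral_mono)
    show "integrable lborel (\<lambda>x. p x * ln (mix_density \<sigma> K w m x))" by (rule mix_plog_int[OF assms])
    show "integrable lborel (\<lambda>x. p x * ln c0)" using p_integrable by simp
    fix x
    have "ln (mix_density \<sigma> K w m x) \<le> ln c0"
      using mix_bounds[OF assms, of x] by simp
    then show "p x * ln (mix_density \<sigma> K w m x) \<le> p x * ln c0"
      using p_bounds(4)[of x] by (intro mult_left_mono) auto
  qed
  also have "\<dots> = ln c0" using p_int by simp
  finally show ?thesis .
qed

lemma gam_tendsto:
  assumes "(\<lambda>n. a n) \<longlonglongrightarrow> b"
  shows "(\<lambda>n. gam \<sigma> (a n) x) \<longlonglongrightarrow> gam \<sigma> b x"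
  unfolding gam_eq using sig by (intro tendsto_intros assms) auto

lemma attain:
  assumes K: "K \<ge> 1"
  shows "\<exists>w0 m0. (w0, m0) \<in> Theta Ms K \<and> (\<forall>w m. (w, m) \<in> Theta Ms K \<longrightarrow> Lf K w m \<le> Lf K w0 m0)"
proof -
  define S where "S = (\<lambda>(w, m). Lf K w m) ` Theta Ms K"
  obtain \<mu> where mu: "\<mu> \<in> Ms" using Ms_ne by auto
  have "((\<lambda>_. 0), (\<lambda>_. \<mu>)) \<in> Theta Ms K" using mu by (simp add: Theta_def)
  then have Sne: "S \<noteq> {}" by (auto simp: S_def)
  have Sbdd: "bdd_above S" unfolding S_def
    by (rule bdd_aboveI[of _ "ln c0"]) (auto intro: Lf_le[OF K])
  define s where "s = Sup S"
  have upper: "Lf K w m \<le> s" if "(w, m) \<in> Theta Ms K" for w m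
    unfolding s_def by (rule cSup_upper[OF _ Sbdd]) (use that in \<open>auto simp: S_def\<close>)
  have "\<forall>n. \<exists>wm. wm \<in> Theta Ms K \<and> s - inverse (real (Suc n)) < Lf K (fst wm) (snd wm)"
  proof
    fix n
    have "s - inverse (real (Suc n)) < s" by simp
    then obtain y where "y \<in> S" "s - inverse (real (Suc n)) < y"
      unfolding s_def using less_cSupD[OF Sne] by blast
    then show "\<exists>wm. wm \<in> Theta Ms K \<and> s - inverse (real (Suc n)) < Lf K (fst wm) (snd wm)"
      by (auto simp: S_def)
  qed
  then obtain th where th: "\<And>n. th n \<in> Theta Ms K" "\<And>n. s - inverse (real (Suc n)) < Lf K (fst (th n)) (snd (th n))"
    by metis
  define ws where "ws n = fst (th n)" for n
  define ms where "ms n = snd (th n)" for n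
  have thw: "(ws n, ms n) \<in> Theta Ms K" for n using th(1)[of n] by (simp add: ws_def ms_def)
  have wb: "ws n k \<in> {0..1}" if "k < K - 1" for n k
  proof -
    have nn: "\<forall>k<K - 1. 0 \<le> ws n k" and sm: "(\<Sum>k<K - 1. ws n k) \<le> 1"
      using thw[of n] by (auto simp: Theta_def)
    have "ws n k \<le> (\<Sum>k<K - 1. ws n k)"
      by (rule member_le_sum) (use that nn in auto)
    then show ?thesis using sm nn that by auto
  qed
  obtain r1 lw where r1: "strict_mono r1" and lw: "\<forall>k<K - 1. lw k \<in> {0..1} \<and> (\<lambda>n. ws (r1 n) k) \<longlonglongrightarrow> lw k"
    using seq_coords[of "{0..1}" "K - 1" ws] wb by auto
  have mb: "ms (r1 n) k \<in> Ms" if "k < K" for n k using thw[of "r1 n"] that by (auto simp: Theta_def)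
  obtain r2 lm where r2: "strict_mono r2" and lm: "\<forall>k<K. lm k \<in> Ms \<and> (\<lambda>n. ms (r1 (r2 n)) k) \<longlonglongrightarrow> lm k"
    using seq_coords[OF cMs, of K "\<lambda>n. ms (r1 n)"] mb by auto
  define r where "r = r1 \<circ> r2"
  have r: "strict_mono r" unfolding r_def using r1 r2 by (rule strict_mono_o)
  have wconv: "(\<lambda>n. ws (r n) k) \<longlonglongrightarrow> lw k" if "k < K - 1" for k
    using LIMSEQ_subseq_LIMSEQ[OF conjunct2[OF lw[rule_format, OF that]] r2] by (simp add: r_def comp_def)
  have mconv: "(\<lambda>n. ms (r n) k) \<longlonglongrightarrow> lm k" if "k < K" for k
    using lm that by (simp add: r_def)
  have lth: "(lw, lm) \<in> Theta Ms K"
  proof -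
    have "(\<lambda>n. \<Sum>k<K - 1. ws (r n) k) \<longlonglongrightarrow> (\<Sum>k<K - 1. lw k)"
      by (intro tendsto_sum wconv) auto
    moreover have "\<forall>n. (\<Sum>k<K - 1. ws (r n) k) \<le> 1" using thw by (auto simp: Theta_def)
    ultimately have "(\<Sum>k<K - 1. lw k) \<le> 1" by (intro LIMSEQ_le_const2) auto
    then show ?thesis using lw lm by (auto simp: Theta_def)
  qed
  have mixconv: "(\<lambda>n. mix_density \<sigma> K (ws (r n)) (ms (r n)) x) \<longlonglongrightarrow> mix_density \<sigma> K lw lm x" for x
  proof -
    have "K - 1 < K" using K by simp
    then show ?thesis
      unfolding mix_density_def
      by (intro tendsto_intros tendsto_sum gam_tendsto wconv mconv) auto
  qed
  have Lconv: "(\<lambda>n. Lf K (ws (r n)) (ms (r n))) \<longlonglongrightarrow> Lf K lw lm"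
    unfolding Lf_def
  proof (rule integral_dominated_convergence[where w = W])
    show "(\<lambda>x. p x * ln (mix_density \<sigma> K lw lm x)) \<in> borel_measurable lborel" by measurable
    show "(\<lambda>x. p x * ln (mix_density \<sigma> K (ws (r n)) (ms (r n)) x)) \<in> borel_measurable lborel" for n
      by measurable
    show "integrable lborel W" by (rule W_integrable)
    show "AE x in lborel. (\<lambda>n. p x * ln (mix_density \<sigma> K (ws (r n)) (ms (r n)) x)) \<longlonglongrightarrow> p x * ln (mix_density \<sigma> K lw lm x)"
      using mix_bounds(4)[OF K lth]
      by (intro AE_I2 tendsto_mult_left tendsto_ln mixconv) (metis less_irrefl)
    show "AE x in lborel. norm (p x * ln (mix_density \<sigma> K (ws (r n)) (ms (r n)) x)) \<le> W x" for n
      using plog_bound mix_bounds[OF K thw[of "r n"]] by (intro AE_I2) auto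
  qed
  have Lconv2: "(\<lambda>n. Lf K (ws (r n)) (ms (r n))) \<longlonglongrightarrow> s"
  proof (rule tendsto_sandwich)
    have "(\<lambda>n. inverse (real (Suc (r n)))) \<longlonglongrightarrow> 0"
      using LIMSEQ_subseq_LIMSEQ[OF LIMSEQ_inverse_real_of_nat r] by (simp add: comp_def)
    then show "(\<lambda>n. s - inverse (real (Suc (r n)))) \<longlonglongrightarrow> s"
      using tendsto_diff[OF tendsto_const[of s]] by fastforce
    show "(\<lambda>n. s) \<longlonglongrightarrow> s" by simp
    show "\<forall>\<^sub>F n in sequentially. s - inverse (real (Suc (r n))) \<le> Lf K (ws (r n)) (ms (r n))"
      using th(2) by (auto simp: ws_def ms_def less_imp_le)
    show "\<forall>\<^sub>F n in sequentially. Lf K (ws (r n)) (ms (r n)) \<le> s"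
      using upper thw by auto
  qed
  have "Lf K lw lm = s" using LIMSEQ_unique[OF Lconv Lconv2] .
  then show ?thesis using lth upper by auto
qed

end

context setting
begin

lemma exists_mu:
  assumes K: "K \<ge> 1" and th: "(w, m) \<in> Theta Ms K"
    and neq: "density lborel p \<noteq> density lborel (mix_density \<sigma> K w m)"
  shows "\<exists>\<mu>\<in>Ms. 1 < (\<integral>\<^sup>+x. ennreal (gam \<sigma> \<mu> x * p x / mix_density \<sigma> K w m x) \<partial>lborel)"
proof (rule ccontr)
  define q where "q = mix_density \<sigma> K w m"
  have qpos: "\<And>x. 0 < q x" unfolding q_def by (rule mix_bounds(4)[OF K th])
  have qm[measurable]: "q \<in> borel_measurable borel" unfolding q_def by simp
  assume "\<not> ?thesis"
  then have le1: "\<And>\<mu>. \<mu> \<in> Ms \<Longrightarrow> (\<integral>\<^sup>+x. ennreal (gam \<sigma> \<mu> x * p x / q x) \<partial>lborel) \<le> 1"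
    by (auto simp: q_def not_less)
  have [measurable_cong]: "sets F = sets borel" by (rule sF)
  have A: "(\<integral>\<^sup>+x. ennreal (p x * p x / q x) \<partial>lborel) \<le> 1"
  proof -
    have "(\<integral>\<^sup>+x. ennreal (p x * p x / q x) \<partial>lborel)
        = (\<integral>\<^sup>+x. (\<integral>\<^sup>+\<mu>. ennreal (gam \<sigma> \<mu> x) \<partial>F) * ennreal (p x / q x) \<partial>lborel)"
    proof (rule nn_integral_cong)
      fix x
      have "ennreal (p x * p x / q x) = ennreal (p x) * ennreal (p x / q x)"
        using p_bounds(4)[of x] qpos[of x] by (simp add: ennreal_mult[symmetric])
      then show "ennreal (p x * p x / q x) = (\<integral>\<^sup>+\<mu>. ennreal (gam \<sigma> \<mu> x) \<partial>F) * ennreal (p x / q x)"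
        by (simp add: p_nn)
    qed
    also have "\<dots> = (\<integral>\<^sup>+x. (\<integral>\<^sup>+\<mu>. ennreal (gam \<sigma> \<mu> x) * ennreal (p x / q x) \<partial>F) \<partial>lborel)"
      by (intro nn_integral_cong nn_integral_multc[symmetric]) (use meas_gamF in measurable)
    also have "\<dots> = (\<integral>\<^sup>+\<mu>. (\<integral>\<^sup>+x. ennreal (gam \<sigma> \<mu> x) * ennreal (p x / q x) \<partial>lborel) \<partial>F)"
      by (rule LF.Fubini'[symmetric]) (unfold gam_def normal_density_def, measurable)
    also have "\<dots> \<le> (\<integral>\<^sup>+\<mu>. 1 \<partial>F)"
    proof (rule nn_integral_mono_AE)
      show "AE \<mu> in F. (\<integral>\<^sup>+x. ennreal (gam \<sigma> \<mu> x) * ennreal (p x / q x) \<partial>lborel) \<le> 1"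
        using AE_Ms
      proof eventually_elim
        case (elim \<mu>)
        have "(\<integral>\<^sup>+x. ennreal (gam \<sigma> \<mu> x) * ennreal (p x / q x) \<partial>lborel) = (\<integral>\<^sup>+x. ennreal (gam \<sigma> \<mu> x * p x / q x) \<partial>lborel)"
        proof (rule nn_integral_cong)
          fix x show "ennreal (gam \<sigma> \<mu> x) * ennreal (p x / q x) = ennreal (gam \<sigma> \<mu> x * p x / q x)"
            using p_bounds(4)[of x] qpos[of x] gam_pos[OF sig, of \<mu> x]
            by (simp add: ennreal_mult[symmetric] times_divide_eq_right)
        qed
        then show ?case using le1[OF elim] by simp
      qed
    qed
    also have "\<dots> = 1" by (simp add: F.emeasure_space_1)
    finally show ?thesis .
  qed
  have B: "ennreal ((p x - q x)\<^sup>2 / q x) + ennreal (2 * p x) = ennreal (p x * p x / q x) + ennreal (q x)" for x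
  proof -
    have "(p x - q x)\<^sup>2 / q x + 2 * p x = p x * p x / q x + q x"
      using qpos[of x] by (simp add: field_simps power2_eq_square)
    moreover have "0 \<le> (p x - q x)\<^sup>2 / q x" using qpos[of x] by simp
    ultimately show ?thesis using p_bounds(4)[of x] qpos[of x]
      by (simp add: ennreal_plus[symmetric] del: ennreal_plus)
  qed
  define X where "X = (\<integral>\<^sup>+x. ennreal ((p x - q x)\<^sup>2 / q x) \<partial>lborel)"
  have "X + 2 = (\<integral>\<^sup>+x. ennreal ((p x - q x)\<^sup>2 / q x) + ennreal (2 * p x) \<partial>lborel)"
  proof -
    have "(\<integral>\<^sup>+x. ennreal (2 * p x) \<partial>lborel) = 2"
      using p_nn_int p_bounds(4) by (simp add: ennreal_mult nn_integral_cmult less_imp_le)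
    then show ?thesis unfolding X_def by (subst nn_integral_add) auto
  qed
  also have "\<dots> = (\<integral>\<^sup>+x. ennreal (p x * p x / q x) + ennreal (q x) \<partial>lborel)" by (simp add: B)
  also have "\<dots> = (\<integral>\<^sup>+x. ennreal (p x * p x / q x) \<partial>lborel) + 1"
    using mix_nn_int[OF K th] by (subst nn_integral_add) (auto simp: q_def)
  also have "\<dots> \<le> 1 + 1" using A by (intro add_right_mono)
  finally have "X + 2 \<le> 0 + 2" by simp
  then have "2 + X \<le> 2 + 0" by (simp add: add.commute)
  then have "X = 0" by (subst (asm) ennreal_add_left_cancel_le) auto
  then have "AE x in lborel. ennreal ((p x - q x)\<^sup>2 / q x) = 0"
    unfolding X_def by (subst (asm) nn_integral_0_iff_AE) auto
  then have "AE x in lborel. ennreal (p x) = ennreal (q x)"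
  proof eventually_elim
    case (elim x)
    then have "(p x - q x)\<^sup>2 / q x \<le> 0" by (simp only: ennreal_eq_0_iff)
    then have "(p x - q x)\<^sup>2 \<le> 0" using qpos[of x] by (simp add: divide_le_0_iff)
    then show ?case by simp
  qed
  then have "density lborel p = density lborel q" by (intro density_cong) auto
  then show False using neq by (simp add: q_def)
qed

end

lemma ln_lower:
  fixes u :: real
  assumes "u \<ge> -1/2"
  shows "u - 2*u\<^sup>2 \<le> ln (1 + u)"
proof -
  have pos: "1 + u > 0" using assms by linarith
  have "ln (1 / (1 + u)) \<le> 1 / (1 + u) - 1" using pos by (intro ln_le_minus_one) auto
  then have "1 - 1 / (1 + u) \<le> ln (1 + u)" using pos by (simp add: ln_div)
  moreover have "u - 2*u\<^sup>2 \<le> 1 - 1 / (1 + u)"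
  proof -
    have "1 - 1 / (1 + u) - (u - 2*u\<^sup>2) = u\<^sup>2 * (1 + 2*u) / (1 + u)"
      using pos by (simp add: field_simps power2_eq_square)
    moreover have "0 \<le> u\<^sup>2 * (1 + 2*u) / (1 + u)" using pos assms by simp
    ultimately show ?thesis by linarith
  qed
  ultimately show ?thesis by linarith
qed

context setting
begin

lemma improve:
  assumes K: "K \<ge> 1" and th: "(w, m) \<in> Theta Ms K"
    and neq: "density lborel p \<noteq> density lborel (mix_density \<sigma> K w m)"
  shows "\<exists>w' m'. (w', m') \<in> Theta Ms (Suc K) \<and> Lf K w m < Lf (Suc K) w' m'"
proof -
  define q where "q = mix_density \<sigma> K w m"
  have qpos: "\<And>x. 0 < q x" unfolding q_def by (rule mix_bounds(4)[OF K th])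
  have qgl: "\<And>x. gl x \<le> q x" unfolding q_def by (rule mix_bounds(1)[OF K th])
  have qm[measurable]: "q \<in> borel_measurable borel" unfolding q_def by simp
  obtain \<mu> where mu: "\<mu> \<in> Ms" and mu1: "1 < (\<integral>\<^sup>+x. ennreal (gam \<sigma> \<mu> x * p x / q x) \<partial>lborel)"
    using exists_mu[OF K th neq] by (auto simp: q_def)
  define g where "g x = gam \<sigma> \<mu> x / q x" for x
  have gm[measurable]: "g \<in> borel_measurable borel" unfolding g_def[abs_def] by measurable
  have gnn: "0 \<le> g x" for x using qpos[of x] gam_pos[OF sig, of \<mu> x] by (simp add: g_def)
  have gbound: "g x \<le> exp ((4*R*\<bar>x\<bar> + R\<^sup>2) / (2*\<sigma>\<^sup>2))" for x
  proof -
    have "g x \<le> gam \<sigma> \<mu> x / gl x" unfolding g_def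
      using qgl[of x] gl_pos[of x] gam_pos[OF sig, of \<mu> x] by (intro divide_left_mono) auto
    also have "gam \<sigma> \<mu> x / gl x = exp (-(x - \<mu>)\<^sup>2 / (2 * \<sigma>\<^sup>2)) / exp (-(\<bar>x\<bar> + R)\<^sup>2 / (2 * \<sigma>\<^sup>2))"
      unfolding gam_eq gl_def c0_def using sig by simp
    also have "\<dots> = exp (((\<bar>x\<bar> + R)\<^sup>2 - (x - \<mu>)\<^sup>2) / (2 * \<sigma>\<^sup>2))"
      by (simp add: exp_diff[symmetric] diff_divide_distrib)
    also have "\<dots> \<le> exp ((4*R*\<bar>x\<bar> + R\<^sup>2) / (2*\<sigma>\<^sup>2))"
    proof -
      have "x*\<mu> \<le> \<bar>x\<bar>*\<bar>\<mu>\<bar>" by (metis abs_ge_self abs_mult)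
      also have "\<dots> \<le> \<bar>x\<bar>*R" using MsR[OF mu] by (intro mult_left_mono) auto
      finally have xm: "x*\<mu> \<le> R*\<bar>x\<bar>" by (simp add: mult.commute)
      have e1: "(\<bar>x\<bar> + R)\<^sup>2 - (x - \<mu>)\<^sup>2 = 2*(R*\<bar>x\<bar>) + R\<^sup>2 + 2*(x*\<mu>) - \<mu>\<^sup>2"
        by (simp add: power2_eq_square algebra_simps)
      have e2: "4*R*\<bar>x\<bar> = 4*(R*\<bar>x\<bar>)" by simp
      have "(\<bar>x\<bar> + R)\<^sup>2 - (x - \<mu>)\<^sup>2 \<le> 4*R*\<bar>x\<bar> + R\<^sup>2"
        using xm e1 e2 zero_le_power2[of \<mu>] by linarith
      then show ?thesis using sig by (simp add: divide_right_mono)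
    qed
    finally show ?thesis .
  qed
  define B2 where "B2 x = c0 * exp ((5*R/\<sigma>\<^sup>2)*\<bar>x\<bar> + R\<^sup>2/\<sigma>\<^sup>2 - (1/(2*\<sigma>\<^sup>2))*x\<^sup>2)" for x
  have B2int: "integrable lborel B2"
    unfolding B2_def[abs_def] using sig
    by (intro Bochner_Integration.integrable_mult_right exp_integrable) auto
  have pg2: "p x * (g x)\<^sup>2 \<le> B2 x" for x
  proof -
    have "(g x)\<^sup>2 \<le> (exp ((4*R*\<bar>x\<bar> + R\<^sup>2) / (2*\<sigma>\<^sup>2)))\<^sup>2"
      using gbound[of x] gnn[of x] by (intro power_mono) auto
    also have "\<dots> = exp (2 * ((4*R*\<bar>x\<bar> + R\<^sup>2) / (2*\<sigma>\<^sup>2)))"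
      by (simp only: power2_eq_square mult_exp_exp mult_2)
    also have "\<dots> = exp ((4*R*\<bar>x\<bar> + R\<^sup>2) / \<sigma>\<^sup>2)"
      using sig by (intro arg_cong[where f=exp]) (simp add: field_simps)
    finally have g2: "(g x)\<^sup>2 \<le> exp ((4*R*\<bar>x\<bar> + R\<^sup>2) / \<sigma>\<^sup>2)" .
    have "p x * (g x)\<^sup>2 \<le> gu x * exp ((4*R*\<bar>x\<bar> + R\<^sup>2) / \<sigma>\<^sup>2)"
      using p_bounds(2)[of x] p_bounds(4)[of x] g2 by (intro mult_mono) auto
    also have "\<dots> = B2 x"
    proof -
      have "(2*R*\<bar>x\<bar> - x\<^sup>2) / (2 * \<sigma>\<^sup>2) + (4*R*\<bar>x\<bar> + R\<^sup>2) / \<sigma>\<^sup>2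
          = (5*R/\<sigma>\<^sup>2)*\<bar>x\<bar> + R\<^sup>2/\<sigma>\<^sup>2 - (1/(2*\<sigma>\<^sup>2))*x\<^sup>2"
        using sig by (simp add: field_simps)
      then show ?thesis unfolding gu_def B2_def by (simp add: mult.assoc mult_exp_exp)
    qed
    finally show ?thesis .
  qed
  have pg2_int: "integrable lborel (\<lambda>x. p x * (g x)\<^sup>2)"
    by (rule Bochner_Integration.integrable_bound[OF B2int]) (use pg2 p_bounds(4) in \<open>auto intro!: AE_I2 order_trans[OF _ abs_ge_self] simp: less_imp_le\<close>)
  have pg_int: "integrable lborel (\<lambda>x. p x * g x)"
  proof (rule Bochner_Integration.integrable_bound)
    show "integrable lborel (\<lambda>x. p x + p x * (g x)\<^sup>2)"
      using p_integrable pg2_int by (rule Bochner_Integration.integrable_add)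
    show "AE x in lborel. norm (p x * g x) \<le> norm (p x + p x * (g x)\<^sup>2)"
    proof (intro AE_I2)
      fix x
      have "g x \<le> 1 + (g x)\<^sup>2"
      proof -
        have "0 \<le> (g x - 1/2)\<^sup>2" by simp
        then show ?thesis by (simp add: power2_eq_square algebra_simps)
      qed
      then have "p x * g x \<le> p x * (1 + (g x)\<^sup>2)" using p_bounds(4)[of x] by (intro mult_left_mono) auto
      then show "norm (p x * g x) \<le> norm (p x + p x * (g x)\<^sup>2)"
        using p_bounds(4)[of x] gnn[of x] by (simp add: algebra_simps)
    qed
  qed simp
  define c where "c = (\<integral>x. p x * g x \<partial>lborel)"
  have c1: "1 < c"
  proof -
    have "(\<integral>\<^sup>+x. ennreal (gam \<sigma> \<mu> x * p x / q x) \<partial>lborel) = (\<integral>\<^sup>+x. ennreal (p x * g x) \<partial>lborel)"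
      by (simp add: g_def mult.commute)
    also have "\<dots> = ennreal c" unfolding c_def
      using pg_int p_bounds(4) gnn by (intro nn_integral_eq_integral) (auto intro!: AE_I2 simp: less_imp_le)
    finally show ?thesis using mu1 by simp
  qed
  define V where "V = (\<integral>x. p x * (g x - 1)\<^sup>2 \<partial>lborel)"
  have pv_eq: "(\<lambda>x. p x * (g x - 1)\<^sup>2) = (\<lambda>x. p x * (g x)\<^sup>2 - 2 * (p x * g x) + p x)"
    by (rule ext) (simp add: power2_eq_square algebra_simps)
  have pv_int: "integrable lborel (\<lambda>x. p x * (g x - 1)\<^sup>2)"
    unfolding pv_eq
    by (intro Bochner_Integration.integrable_add Bochner_Integration.integrable_diff
          Bochner_Integration.integrable_mult_right pg2_int pg_int p_integrable)
  have V0: "0 \<le> V" unfolding V_def using p_bounds(4)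
    by (intro integral_nonneg_AE AE_I2) (simp add: less_imp_le)
  define t where "t = min (1/2) ((c - 1) / (4*V + 1))"
  have t0: "0 < t" using c1 V0 by (simp add: t_def)
  have t12: "t \<le> 1/2" unfolding t_def by (rule min.cobounded1)
  have tV: "2*t*V < c - 1"
  proof -
    have "t \<le> (c - 1) / (4*V + 1)" by (simp add: t_def)
    then have "t * (4*V + 1) \<le> c - 1" using V0 by (simp add: pos_le_divide_eq)
    then have "4*t*V + t \<le> c - 1" by (simp add: algebra_simps)
    moreover have "0 \<le> t*V" using t0 V0 by simp
    ultimately show ?thesis using t0 by linarith
  qed
  obtain K' where K': "K = Suc K'" using K by (cases K) auto
  define sw where "sw = (\<Sum>k<K'. w k)"
  have wnn: "\<And>k. k < K' \<Longrightarrow> 0 \<le> w k" and sw1: "sw \<le> 1" and mMs: "\<And>k. k < K \<Longrightarrow> m k \<in> Ms"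
    using th by (auto simp: Theta_def K' sw_def)
  define w' where "w' k = (if k < K' then (1 - t) * w k else (1 - t) * (1 - sw))" for k
  define m' where "m' k = (if k < K then m k else \<mu>)" for k
  have sw': "(\<Sum>k<K. w' k) = 1 - t"
  proof -
    have "(\<Sum>k<K. w' k) = (\<Sum>k<K'. w' k) + w' K'" by (simp add: K')
    also have "(\<Sum>k<K'. w' k) = (1 - t) * sw"
      by (simp add: w'_def sw_def sum_distrib_left)
    finally show ?thesis by (simp add: w'_def algebra_simps)
  qed
  have th': "(w', m') \<in> Theta Ms (Suc K)"
    unfolding Theta_def using sw' t0 t12 wnn sw1 mMs mu
    by (auto simp: w'_def m'_def K' less_Suc_eq)
  have mix': "mix_density \<sigma> (Suc K) w' m' x = q x * (1 + t * (g x - 1))" for x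
  proof -
    have "(\<Sum>k<K. w' k * gam \<sigma> (m' k) x) = (\<Sum>k<K'. w' k * gam \<sigma> (m' k) x) + w' K' * gam \<sigma> (m' K') x"
      by (simp add: K')
    also have "(\<Sum>k<K'. w' k * gam \<sigma> (m' k) x) = (1 - t) * (\<Sum>k<K'. w k * gam \<sigma> (m k) x)"
      by (simp add: w'_def m'_def K' sum_distrib_left algebra_simps)
    finally have s1: "(\<Sum>k<K. w' k * gam \<sigma> (m' k) x) = (1 - t) * q x"
      by (simp add: q_def mix_density_def w'_def m'_def K' sw_def algebra_simps)
    have "mix_density \<sigma> (Suc K) w' m' x = (1 - t) * q x + t * gam \<sigma> \<mu> x"
      unfolding mix_density_def using s1 sw' by (simp add: m'_def)
    also have "\<dots> = q x * (1 + t * (g x - 1))"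
      using qpos[of x] by (simp add: g_def field_simps)
    finally show ?thesis .
  qed
  have "Lf (Suc K) w' m' - Lf K w m
      = (\<integral>x. p x * ln (mix_density \<sigma> (Suc K) w' m' x) - p x * ln (q x) \<partial>lborel)"
    unfolding Lf_def q_def
    by (rule Bochner_Integration.integral_diff[symmetric]) (auto intro: mix_plog_int th' th K)
  also have "\<dots> \<ge> (\<integral>x. t * (p x * g x - p x) - 2 * t\<^sup>2 * (p x * (g x - 1)\<^sup>2) \<partial>lborel)"
  proof (rule integral_mono)
    show "integrable lborel (\<lambda>x. t * (p x * g x - p x) - 2 * t\<^sup>2 * (p x * (g x - 1)\<^sup>2))"
      by (intro Bochner_Integration.integrable_diff Bochner_Integration.integrable_mult_right pv_int pg_int p_integrable)
    show "integrable lborel (\<lambda>x. p x * ln (mix_density \<sigma> (Suc K) w' m' x) - p x * ln (q x))"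
      unfolding q_def by (intro Bochner_Integration.integrable_diff mix_plog_int th' th K) auto
    fix x
    define u where "u = t * (g x - 1)"
    have u: "-1/2 \<le> u"
    proof -
      have "t * (g x - 1) \<ge> t * (-1)" using t0 gnn[of x] by (intro mult_left_mono) auto
      then show ?thesis using t12 by (simp add: u_def)
    qed
    have "p x * ln (mix_density \<sigma> (Suc K) w' m' x) - p x * ln (q x) = p x * ln (1 + u)"
    proof -
      have "1 + u > 0" using u by linarith
      then have "ln (mix_density \<sigma> (Suc K) w' m' x) = ln (q x) + ln (1 + u)"
        unfolding mix' u_def using qpos[of x] by (simp add: ln_mult)
      then show ?thesis by (simp add: algebra_simps)
    qed
    also have "\<dots> \<ge> p x * (u - 2*u\<^sup>2)"
      using ln_lower[OF u] p_bounds(4)[of x] by (intro mult_left_mono) auto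
    finally show "t * (p x * g x - p x) - 2 * t\<^sup>2 * (p x * (g x - 1)\<^sup>2) \<le> p x * ln (mix_density \<sigma> (Suc K) w' m' x) - p x * ln (q x)"
      by (simp add: u_def power2_eq_square algebra_simps)
  qed
  also have "(\<integral>x. t * (p x * g x - p x) - 2 * t\<^sup>2 * (p x * (g x - 1)\<^sup>2) \<partial>lborel) = t * (c - 1) - 2 * t\<^sup>2 * V"
  proof -
    have "(\<integral>x. t * (p x * g x - p x) - 2 * t\<^sup>2 * (p x * (g x - 1)\<^sup>2) \<partial>lborel)
        = (\<integral>x. t * (p x * g x - p x) \<partial>lborel) - (\<integral>x. 2 * t\<^sup>2 * (p x * (g x - 1)\<^sup>2) \<partial>lborel)"
      by (intro Bochner_Integration.integral_diff Bochner_Integration.integrable_diff Bochner_Integration.integrable_mult_right pv_int pg_int p_integrable)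
    also have "(\<integral>x. t * (p x * g x - p x) \<partial>lborel) = t * (c - 1)"
      using pg_int p_integrable p_int by (simp add: c_def)
    also have "(\<integral>x. 2 * t\<^sup>2 * (p x * (g x - 1)\<^sup>2) \<partial>lborel) = 2 * t\<^sup>2 * V"
      by (simp add: V_def)
    finally show ?thesis .
  qed
  finally have "t * (c - 1) - 2 * t\<^sup>2 * V \<le> Lf (Suc K) w' m' - Lf K w m" .
  moreover have "0 < t * (c - 1) - 2 * t\<^sup>2 * V"
  proof -
    have "t * (c - 1) - 2 * t\<^sup>2 * V = t * ((c - 1) - 2*t*V)" by (simp add: power2_eq_square algebra_simps)
    moreover have "0 < t * ((c - 1) - 2*t*V)" using t0 tV by simp
    ultimately show ?thesis by simp
  qed
  ultimately show ?thesis using th' by force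
qed

end

context setting
begin

lemma rel_ent_mix:
  assumes K: "K \<ge> 1" and th: "(w, m) \<in> Theta Ms K"
  shows "rel_entropy (density lborel p) (density lborel (mix_density \<sigma> K w m))
       = ereal ((\<integral>x. p x * ln (p x) \<partial>lborel) - Lf K w m)"
  unfolding Lf_def
  by (rule rel_ent[OF mix_meas mix_bounds(1)[OF K th] mix_bounds(3)[OF K th] mix_nn_int[OF K th]])

lemma main:
  assumes K: "K \<ge> 1" and notin: "density lborel p \<notin> Pi_model \<sigma> Ms K"
  shows "rel_entropy_set (density lborel p) (Pi_model \<sigma> Ms (Suc K))
         < rel_entropy_set (density lborel p) (Pi_model \<sigma> Ms K)"
proof -
  define C where "C = (\<integral>x. p x * ln (p x) \<partial>lborel)"
  obtain w0 m0 where th0: "(w0, m0) \<in> Theta Ms K"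
    and best: "\<And>w m. (w, m) \<in> Theta Ms K \<Longrightarrow> Lf K w m \<le> Lf K w0 m0"
    using attain[OF K] by blast
  have "density lborel (mix_density \<sigma> K w0 m0) \<in> Pi_model \<sigma> Ms K"
    unfolding Pi_model_def using th0 by blast
  then have neq: "density lborel p \<noteq> density lborel (mix_density \<sigma> K w0 m0)"
    using notin by metis
  obtain w' m' where th': "(w', m') \<in> Theta Ms (Suc K)" and lt: "Lf K w0 m0 < Lf (Suc K) w' m'"
    using improve[OF K th0 neq] by blast
  have "rel_entropy_set (density lborel p) (Pi_model \<sigma> Ms (Suc K))
      \<le> rel_entropy (density lborel p) (density lborel (mix_density \<sigma> (Suc K) w' m'))"
    unfolding rel_entropy_set_def
    by (rule INF_lower) (unfold Pi_model_def, use th' in blast)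
  also have "\<dots> = ereal (C - Lf (Suc K) w' m')"
    unfolding C_def using th' by (intro rel_ent_mix) auto
  also have "\<dots> < ereal (C - Lf K w0 m0)" using lt by simp
  also have "\<dots> \<le> rel_entropy_set (density lborel p) (Pi_model \<sigma> Ms K)"
    unfolding rel_entropy_set_def
  proof (rule INF_greatest)
    fix Q assume "Q \<in> Pi_model \<sigma> Ms K"
    then obtain w m where Q: "Q = density lborel (mix_density \<sigma> K w m)" and th: "(w, m) \<in> Theta Ms K"
      unfolding Pi_model_def by blast
    show "ereal (C - Lf K w0 m0) \<le> rel_entropy (density lborel p) Q"
      unfolding Q rel_ent_mix[OF K th] C_def using best[OF th] by simp
  qed
  finally show ?thesis .
qed

end

theorem proposition1:
  fixes \<sigma> :: real and Ms :: "real set" and F :: "real measure" and K :: nat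
  assumes "\<sigma> > 0" and "compact Ms"
    and "prob_space F" and "sets F = sets borel" and "emeasure F Ms = 1"
    and "K \<ge> 1"
    and "density lborel (pstar \<sigma> F) \<notin> Pi_model \<sigma> Ms K"
  shows "rel_entropy_set (density lborel (pstar \<sigma> F)) (Pi_model \<sigma> Ms (Suc K))
         < rel_entropy_set (density lborel (pstar \<sigma> F)) (Pi_model \<sigma> Ms K)"
proof -
  have "bounded Ms" using assms(2) by (rule compact_imp_bounded)
  then obtain a where a: "\<forall>x\<in>Ms. \<bar>x\<bar> \<le> a" unfolding bounded_real by blast
  have s: "setting \<sigma> (max 0 a) Ms F"
  proof (rule setting.intro)
    fix m assume "m \<in> Ms" then show "\<bar>m\<bar> \<le> max 0 a" using a by force
  qed (simp_all add: assms)
  interpret setting \<sigma> "max 0 a" Ms F by (rule s)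
  show ?thesis by (rule main[OF assms(6,7)])
qed

end
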